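(* The kernel of the homomorphism $j^{*}:\pi_{1}(Y_{1},(0,0))\rightarrow\pi_{1}(HA,(0,0))$ induced by the inclusion $j:Y_1\hookrightarrow HA$ is uncountable.
   Context: For $n\geq1$ let $X_{n}\subset\mathbb{R}^{2}$ be the circle of radius $\frac1n$ centered at $(\frac1n,0)$ and $Y_{1}=\bigcup_{i\geq1}X_{i}$ (the Hawaiian earring). Let $A_{n}\subset\mathbb{R}^2$ be the closed pinched annulus bounded by $X_{n}\cup X_{n+1}$ and $Y^{n}=Y_{1}\cup A_{1}\cup\dots\cup A_{n}$ with the Euclidean subspace topology. The harmonic archipelago $HA$ has underlying set $\bigcup_{n}Y^{n}$, with a topology such that each $Y^{n}$ inherits its usual topology and: (1) there is a sequence $z_{n}\in\operatorname{int}(A_{n})$ such that $\{z_{1},z_{2},\dots\}$ has no subsequential limit, and (2) if $p\in HA$ is a subsequential limit of a sequence $(y_n)$ with $y_{n}\in\operatorname{int}(A_{n})$ for all $n$, then $p=(0,0)$. *)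

theory Defs
  imports "HOL-Analysis.Analysis"
begin

definition HE_circle :: "nat \<Rightarrow> (real \<times> real) set" where
  "HE_circle n = sphere (1 / real n, 0) (1 / real n)"

definition Y1 :: "(real \<times> real) set" where
  "Y1 = (\<Union>n\<in>{1..}. HE_circle n)"

definition annulus :: "nat \<Rightarrow> (real \<times> real) set" where
  "annulus n = cball (1 / real n, 0) (1 / real n) - ball (1 / real (Suc n), 0) (1 / real (Suc n))"

definition Yn :: "nat \<Rightarrow> (real \<times> real) set" where
  "Yn n = Y1 \<union> (\<Union>i\<in>{1..n}. annulus i)"

definition HA_set :: "(real \<times> real) set" where
  "HA_set = (\<Union>n\<in>{1..}. Yn n)"

text \<open>A topology on the harmonic archipelago as described in the paper.
  Interior of A_n is taken in the plane.  Sequences are indexed so that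
  the n-th term lies in int(A_(n+1)).\<close>
definition HA_topology :: "(real \<times> real) topology \<Rightarrow> bool" where
  "HA_topology T \<longleftrightarrow>
     topspace T = HA_set \<and>
     (\<forall>n\<ge>1. subtopology T (Yn n) = top_of_set (Yn n)) \<and>
     (\<exists>z. (\<forall>n. z n \<in> interior (annulus (Suc n))) \<and>
          \<not> (\<exists>p r. strict_mono r \<and> limitin T (z \<circ> r) p sequentially)) \<and>
     (\<forall>y p r. (\<forall>n. y n \<in> interior (annulus (Suc n))) \<and> strict_mono r \<and>
          limitin T (y \<circ> r) p sequentially \<longrightarrow> p = (0, 0))"

text \<open>Loops in Y_1 based at (0,0); normalised to be constant (0,0) outside [0,1]
  so that the (library) homotopy relation only sees the values on [0,1].\<close>
definition Y1_loop :: "(real \<Rightarrow> real \<times> real) \<Rightarrow> bool" where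
  "Y1_loop g \<longleftrightarrow> path g \<and> path_image g \<subseteq> Y1 \<and> pathstart g = (0,0) \<and>
     pathfinish g = (0,0) \<and> (\<forall>t. t \<notin> {0..1} \<longrightarrow> g t = (0,0))"

text \<open>Loops whose class lies in the kernel of j^*: null-homotopic rel endpoints in HA.\<close>
definition kernel_loops :: "(real \<times> real) topology \<Rightarrow> (real \<Rightarrow> real \<times> real) set" where
  "kernel_loops T = {g. Y1_loop g \<and>
     homotopic_with (\<lambda>h. h 0 = (0,0) \<and> h 1 = (0,0)) (top_of_set {0..1}) T g (\<lambda>_. (0,0))}"

definition Y1_homotopy_rel :: "((real \<Rightarrow> real \<times> real) \<times> (real \<Rightarrow> real \<times> real)) set" where
  "Y1_homotopy_rel = {(g, h). Y1_loop g \<and> Y1_loop h \<and> homotopic_paths Y1 g h}"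

end

theory Submission
  imports Defs
begin

definition hu :: "real \<Rightarrow> real \<times> real" where
  "hu x = (1 - cos (2*pi*x), sin (2*pi*x))"

definition hcirc :: "nat \<Rightarrow> real \<Rightarrow> real \<times> real" where
  "hcirc m x = (1 / real m) *\<^sub>R hu x"

definition cb :: "nat \<Rightarrow> (real \<times> real) set" where
  "cb k = cball (1 / real k, 0) (1 / real k)"

lemma dist_sq: "dist (a::real, b::real) (c, d) ^ 2 = (a - c)^2 + (b - d)^2"
  by (simp add: dist_Pair_Pair dist_real_def power2_abs)

lemma eqk: "(m::real) > 0 \<Longrightarrow> (1 / m - x)^2 + y^2 = (1/m)^2 + (x^2 + y^2 - 2 * x / m)"
  by (simp add: power2_eq_square field_simps)

lemma mem_circle:
  assumes "m \<ge> 1"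
  shows "p \<in> HE_circle m \<longleftrightarrow> fst p ^ 2 + snd p ^ 2 = 2 * fst p / real m"
proof -
  obtain x y where p: "p = (x, y)" by (cases p)
  have m: "real m > 0" using assms by simp
  have "p \<in> HE_circle m \<longleftrightarrow> dist (1 / real m, 0) (x, y) ^ 2 = (1 / real m) ^ 2"
    unfolding HE_circle_def p using m
    by (simp add: power2_eq_iff_nonneg)
  also have "\<dots> \<longleftrightarrow> (1 / real m - x)^2 + y^2 = (1 / real m) ^ 2"
    by (simp add: dist_sq)
  also have "\<dots> \<longleftrightarrow> x^2 + y^2 = 2 * x / real m"
    using m by (simp add: eqk[OF m])
  finally show ?thesis by (simp add: p)
qed

lemma mem_cb:
  assumes "k \<ge> 1"
  shows "p \<in> cb k \<longleftrightarrow> fst p ^ 2 + snd p ^ 2 \<le> 2 * fst p / real k"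
proof -
  obtain x y where p: "p = (x, y)" by (cases p)
  have m: "real k > 0" using assms by simp
  have "p \<in> cb k \<longleftrightarrow> dist (1 / real k, 0) (x, y) ^ 2 \<le> (1 / real k) ^ 2"
    unfolding cb_def p using m
    by (simp add: power_mono_iff)
  also have "\<dots> \<longleftrightarrow> (1 / real k - x)^2 + y^2 \<le> (1 / real k) ^ 2"
    by (simp add: dist_sq)
  also have "\<dots> \<longleftrightarrow> x^2 + y^2 \<le> 2 * x / real k"
    using m by (simp add: eqk[OF m])
  finally show ?thesis by (simp add: p)
qed

lemma mem_ball_k:
  assumes "k \<ge> 1"
  shows "p \<in> ball (1 / real k, 0) (1 / real k) \<longleftrightarrow> fst p ^ 2 + snd p ^ 2 < 2 * fst p / real k"
proof -
  obtain x y where p: "p = (x, y)" by (cases p)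
  have m: "real k > 0" using assms by simp
  have "p \<in> ball (1 / real k, 0) (1 / real k) \<longleftrightarrow> dist (1 / real k, 0) (x, y) ^ 2 < (1 / real k) ^ 2"
    unfolding p using m
    by (auto intro: power_strict_mono dest: power_less_imp_less_base)
  also have "\<dots> \<longleftrightarrow> (1 / real k - x)^2 + y^2 < (1 / real k) ^ 2"
    by (simp add: dist_sq)
  also have "\<dots> \<longleftrightarrow> x^2 + y^2 < 2 * x / real k"
    using m by (simp add: eqk[OF m])
  finally show ?thesis by (simp add: p)
qed

lemma circle_x_nonneg: "m \<ge> 1 \<Longrightarrow> p \<in> HE_circle m \<Longrightarrow> fst p \<ge> 0"
proof -
  assume m: "m \<ge> 1" and p: "p \<in> HE_circle m"
  have "0 \<le> fst p ^ 2 + snd p ^ 2" by simp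
  also have "\<dots> = 2 * fst p / real m" using mem_circle[OF m] p by simp
  finally show ?thesis using m by (simp add: zero_le_divide_iff)
qed

lemma circle_sub_cb: "1 \<le> k \<Longrightarrow> k \<le> m \<Longrightarrow> p \<in> HE_circle m \<Longrightarrow> p \<in> cb k"
proof -
  assume k: "1 \<le> k" "k \<le> m" and p: "p \<in> HE_circle m"
  have m: "m \<ge> 1" using k by simp
  have x: "fst p \<ge> 0" using circle_x_nonneg[OF m p] .
  have "fst p ^ 2 + snd p ^ 2 = 2 * fst p / real m" using mem_circle[OF m] p by simp
  also have "\<dots> \<le> 2 * fst p / real k" using x k
    by (intro divide_left_mono) auto
  finally show ?thesis using mem_cb[OF k(1)] by simp
qed

lemma circle_not_ball: "1 \<le> m \<Longrightarrow> m \<le> k \<Longrightarrow> p \<in> HE_circle m \<Longrightarrow> p \<notin> ball (1 / real k, 0) (1 / real k)"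
proof -
  assume k: "1 \<le> m" "m \<le> k" and p: "p \<in> HE_circle m"
  have k1: "k \<ge> 1" using k by simp
  have x: "fst p \<ge> 0" using circle_x_nonneg[OF k(1) p] .
  have "2 * fst p / real k \<le> 2 * fst p / real m" using x k
    by (intro divide_left_mono) auto
  also have "\<dots> = fst p ^ 2 + snd p ^ 2" using mem_circle[OF k(1)] p by simp
  finally show ?thesis using mem_ball_k[OF k1] by simp
qed

lemma circle_origin: "m \<ge> 1 \<Longrightarrow> p \<in> HE_circle m \<Longrightarrow> fst p = 0 \<Longrightarrow> p = (0, 0)"
  using mem_circle[of m p] by (cases p) auto

lemma zero_in_circle: "m \<ge> 1 \<Longrightarrow> (0, 0) \<in> HE_circle m"
  using mem_circle[of m "(0,0)"] by simp

lemma circle_cb_zero: "1 \<le> n \<Longrightarrow> p \<in> HE_circle n \<Longrightarrow> p \<in> cb (Suc n) \<Longrightarrow> p = (0, 0)"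
proof -
  assume n: "1 \<le> n" and p: "p \<in> HE_circle n" and c: "p \<in> cb (Suc n)"
  have x: "fst p \<ge> 0" using circle_x_nonneg[OF n p] .
  have "2 * fst p / real n = fst p ^ 2 + snd p ^ 2" using mem_circle[OF n] p by simp
  also have "\<dots> \<le> 2 * fst p / real (Suc n)" using mem_cb[of "Suc n" p] c by simp
  finally have "2 * fst p / real n \<le> 2 * fst p / real (Suc n)" .
  hence "fst p \<le> 0" using n by (auto simp: field_simps)
  thus ?thesis using x circle_origin[OF n p] by simp
qed

lemma circle_outball_zero: "2 \<le> n \<Longrightarrow> p \<in> HE_circle n \<Longrightarrow> p \<notin> ball (1 / real (n - 1), 0) (1 / real (n - 1)) \<Longrightarrow> p = (0, 0)"
proof -
  assume n2: "2 \<le> n" and p: "p \<in> HE_circle n" and c: "p \<notin> ball (1 / real (n - 1), 0) (1 / real (n - 1))"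
  have n: "n \<ge> 1" using n2 by simp
  have n1: "n - 1 \<ge> 1" using n2 by simp
  have x: "fst p \<ge> 0" using circle_x_nonneg[OF n p] .
  have "2 * fst p / real (n - 1) \<le> fst p ^ 2 + snd p ^ 2" using mem_ball_k[OF n1, of p] c by simp
  also have "\<dots> = 2 * fst p / real n" using mem_circle[OF n] p by simp
  finally have "2 * fst p / real (n - 1) \<le> 2 * fst p / real n" .
  hence "fst p \<le> 0" using n2 by (auto simp: field_simps of_nat_diff)
  thus ?thesis using x circle_origin[OF n p] by simp
qed

lemma circle_inter: "1 \<le> m \<Longrightarrow> 1 \<le> n \<Longrightarrow> m \<noteq> n \<Longrightarrow> p \<in> HE_circle m \<Longrightarrow> p \<in> HE_circle n \<Longrightarrow> p = (0, 0)"
proof -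
  assume m: "1 \<le> m" and n: "1 \<le> n" and mn: "m \<noteq> n" and pm: "p \<in> HE_circle m" and pn: "p \<in> HE_circle n"
  have "2 * fst p / real m = 2 * fst p / real n"
    using mem_circle[OF m, of p] mem_circle[OF n, of p] pm pn by simp
  hence "fst p = 0" using m n mn by (auto simp: field_simps)
  thus ?thesis using circle_origin[OF m pm] by simp
qed

lemma Y1_iff: "p \<in> Y1 \<longleftrightarrow> (\<exists>m\<ge>1. p \<in> HE_circle m)"
  unfolding Y1_def by auto

lemma hcirc_in: "m \<ge> 1 \<Longrightarrow> hcirc m x \<in> HE_circle m"
proof -
  assume m: "m \<ge> 1"
  have "fst (hcirc m x) ^ 2 + snd (hcirc m x) ^ 2 = ((1 - cos (2*pi*x))^2 + (sin (2*pi*x))^2) / real m ^ 2"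
    by (simp add: hcirc_def hu_def power_divide add_divide_distrib)
  also have "\<dots> = (2 - 2 * cos (2*pi*x)) / real m ^ 2"
  proof -
    have "(1 - cos (2*pi*x))^2 + (sin (2*pi*x))^2 = 1 - 2 * cos (2*pi*x) + ((sin (2*pi*x))^2 + (cos (2*pi*x))^2)"
      by (simp add: power2_eq_square algebra_simps)
    thus ?thesis by simp
  qed
  also have "\<dots> = 2 * fst (hcirc m x) / real m"
    using m by (simp add: hcirc_def hu_def power2_eq_square field_simps)
  finally show ?thesis using mem_circle[OF m] by simp
qed

lemma closed_circle: "closed (HE_circle m)"
  by (simp add: HE_circle_def)

lemma closed_cb: "closed (cb m)"
  by (simp add: cb_def)

definition qn :: "nat \<Rightarrow> real \<times> real \<Rightarrow> complex" where
  "qn n p = (if p \<in> HE_circle n then Complex (1 - real n * fst p) (real n * snd p) else 1)"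

lemma Complex_cos_sin: "Complex (cos t) (sin t) = exp (\<i> * complex_of_real t)"
  by (simp add: complex_eq_iff exp_Euler cos_of_real sin_of_real)

lemma qn_hcirc: "n \<ge> 1 \<Longrightarrow> qn n (hcirc n x) = exp (\<i> * complex_of_real (2*pi*x))"
proof -
  assume n: "n \<ge> 1"
  have "qn n (hcirc n x) = Complex (cos (2*pi*x)) (sin (2*pi*x))"
    using hcirc_in[OF n, of x] n by (simp add: qn_def hcirc_def hu_def)
  also have "\<dots> = exp (\<i> * complex_of_real (2*pi*x))" by (rule Complex_cos_sin)
  finally show ?thesis .
qed

lemma qn_zero: "n \<ge> 1 \<Longrightarrow> qn n (0, 0) = 1"
  using zero_in_circle[of n] by (simp add: qn_def one_complex.code)

lemma qn_other: "1 \<le> m \<Longrightarrow> 1 \<le> n \<Longrightarrow> m \<noteq> n \<Longrightarrow> p \<in> HE_circle m \<Longrightarrow> qn n p = 1"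
  using circle_inter[of m n p] qn_zero[of n] by (auto simp: qn_def)

lemma qn_norm: "n \<ge> 1 \<Longrightarrow> norm (qn n p) = 1"
proof (cases "p \<in> HE_circle n")
  case True
  assume n: "n \<ge> 1"
  have e: "fst p ^ 2 + snd p ^ 2 = 2 * fst p / real n" using mem_circle[OF n] True by simp
  have "(1 - real n * fst p)^2 + (real n * snd p)^2 = 1 - 2 * real n * fst p + real n ^ 2 * (fst p ^ 2 + snd p ^ 2)"
    by (simp add: power2_eq_square algebra_simps)
  also have "\<dots> = 1" using e n by (simp add: power2_eq_square field_simps)
  finally show ?thesis using True by (simp add: qn_def cmod_def)
qed (simp add: qn_def)

lemma qn_nonzero: "n \<ge> 1 \<Longrightarrow> qn n p \<noteq> 0"
  using qn_norm[of n p] by auto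

lemma Y1_cover:
  assumes n: "n \<ge> 2" and p: "p \<in> Y1"
  shows "p \<in> HE_circle n \<or> p \<in> cb (Suc n) \<or> p \<notin> ball (1 / real (n - 1), 0) (1 / real (n - 1))"
proof -
  obtain m where m: "m \<ge> 1" "p \<in> HE_circle m" using p Y1_iff by auto
  consider "m = n" | "m > n" | "m < n" by linarith
  thus ?thesis
  proof cases
    case 1 thus ?thesis using m by simp
  next
    case 2 thus ?thesis using circle_sub_cb[of "Suc n" m p] m by simp
  next
    case 3 thus ?thesis using circle_not_ball[of m "n - 1" p] m by simp
  qed
qed

lemma qn_cont: assumes n: "n \<ge> 2" shows "continuous_on Y1 (qn n)"
proof -
  define C where "C = cb (Suc n) \<union> - ball (1 / real (n - 1), 0) (1 / real (n - 1))"
  have clC: "closed C" unfolding C_def using closed_cb by auto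
  have Y: "Y1 = (Y1 \<inter> HE_circle n) \<union> (Y1 \<inter> C)"
  proof -
    have "p \<in> HE_circle n \<or> p \<in> C" if "p \<in> Y1" for p
      using Y1_cover[OF n that] unfolding C_def by blast
    thus ?thesis by blast
  qed
  have "continuous_on ((Y1 \<inter> HE_circle n) \<union> (Y1 \<inter> C))
     (\<lambda>p. if p \<in> HE_circle n then Complex (1 - real n * fst p) (real n * snd p) else 1)"
  proof (rule continuous_on_cases_local)
    show "closedin (top_of_set (Y1 \<inter> HE_circle n \<union> Y1 \<inter> C)) (Y1 \<inter> HE_circle n)"
      by (subst Y[symmetric]) (simp add: closedin_closed_Int closed_circle)
    show "closedin (top_of_set (Y1 \<inter> HE_circle n \<union> Y1 \<inter> C)) (Y1 \<inter> C)"
      by (subst Y[symmetric]) (simp add: closedin_closed_Int clC)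
    show "continuous_on (Y1 \<inter> HE_circle n) (\<lambda>p. Complex (1 - real n * fst p) (real n * snd p))"
      by (intro continuous_intros)
    show "continuous_on (Y1 \<inter> C) (\<lambda>p. 1)" by simp
    fix p assume "p \<in> Y1 \<inter> HE_circle n \<and> p \<notin> HE_circle n \<or> p \<in> Y1 \<inter> C \<and> p \<in> HE_circle n"
    hence "p \<in> HE_circle n" "p \<in> C" by auto
    hence "p = (0, 0)" unfolding C_def using circle_cb_zero[of n p] circle_outball_zero[OF n, of p] n by auto
    thus "Complex (1 - real n * fst p) (real n * snd p) = 1" by (simp add: one_complex.code)
  qed
  thus ?thesis using Y unfolding qn_def by simp
qed

definition tpi :: complex where "tpi = 2 * complex_of_real pi * \<i>"

lemma exp1_cases:
  assumes "exp w = 1"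
  shows "w = tpi \<or> dist w tpi \<ge> 2 * pi"
proof -
  obtain j :: int where re: "Re w = 0" and im: "Im w = of_int (2 * j) * pi"
    using assms exp_eq_1 by blast
  have d: "dist w tpi = \<bar>Im w - 2 * pi\<bar>"
    using re by (simp add: tpi_def dist_norm cmod_def)
  show ?thesis
  proof (cases "j = 1")
    case True
    thus ?thesis using re im by (simp add: tpi_def complex_eq_iff)
  next
    case False
    hence "j \<le> 0 \<or> j \<ge> 2" by linarith
    hence "\<bar>real_of_int j - 1\<bar> \<ge> 1" by auto
    hence "\<bar>real_of_int j - 1\<bar> * (2 * pi) \<ge> 1 * (2 * pi)"
      by (intro mult_right_mono) auto
    moreover have "\<bar>Im w - 2 * pi\<bar> = \<bar>real_of_int j - 1\<bar> * (2 * pi)"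
    proof -
      have "Im w - 2 * pi = (real_of_int j - 1) * (2 * pi)" using im by (simp add: algebra_simps)
      thus ?thesis by (simp add: abs_mult)
    qed
    ultimately show ?thesis using d by simp
  qed
qed

definition Phi :: "(real \<times> real) \<times> complex \<Rightarrow> complex" where
  "Phi z = (if fst z \<in> HE_circle 1 \<and> dist (snd z) tpi < pi then qn 1 (fst z) else 1)"

definition Zset :: "nat \<Rightarrow> ((real \<times> real) \<times> complex) set" where
  "Zset n = {z. fst z \<in> Y1 \<and> exp (snd z) = qn n (fst z)}"

lemma Phi_zero: "Phi ((0, 0), w) = 1"
  using qn_zero[of 1] by (simp add: Phi_def)

lemma Phi_nonzero: "Phi z \<noteq> 0"
  using qn_nonzero[of 1] by (simp add: Phi_def)

lemma Phi_cont:
  assumes n: "n \<ge> 2"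
  shows "continuous_on (Zset n) Phi"
proof -
  define A where "A = Zset n \<inter> (HE_circle 1 \<times> cball tpi pi)"
  define B where "B = Zset n \<inter> ((cb 2 \<times> UNIV) \<union> (HE_circle 1 \<times> - ball tpi pi))"
  have clA: "closed (HE_circle 1 \<times> cball tpi pi)"
    by (intro closed_Times closed_circle closed_cball)
  have clB: "closed ((cb 2 \<times> UNIV) \<union> (HE_circle 1 \<times> - ball tpi pi))"
    by (intro closed_Un closed_Times closed_cb closed_circle closed_UNIV) auto
  have Z: "Zset n = A \<union> B"
  proof -
    have "z \<in> A \<or> z \<in> B" if z: "z \<in> Zset n" for z
    proof -
      obtain m where m: "m \<ge> 1" "fst z \<in> HE_circle m" using z Y1_iff unfolding Zset_def by auto
      show ?thesis
      proof (cases "m = 1")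
        case True
        thus ?thesis using z m unfolding A_def B_def by (cases z) (auto simp: not_less)
      next
        case False
        hence "fst z \<in> cb 2" using circle_sub_cb[of 2 m "fst z"] m by simp
        thus ?thesis using z unfolding B_def by (cases z) auto
      qed
    qed
    thus ?thesis unfolding A_def B_def by blast
  qed
  have eqPhi: "Phi z = (if fst z \<in> HE_circle 1 \<and> dist (snd z) tpi < pi
      then Complex (1 - fst (fst z)) (snd (fst z)) else 1)" for z
    by (simp add: Phi_def qn_def)
  have "continuous_on (A \<union> B) (\<lambda>z. if fst z \<in> HE_circle 1 \<and> dist (snd z) tpi < pi
      then Complex (1 - fst (fst z)) (snd (fst z)) else 1)"
  proof (rule continuous_on_cases_local)
    show "closedin (top_of_set (A \<union> B)) A"
      unfolding Z[symmetric] using clA by (simp add: A_def closedin_closed_Int)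
    show "closedin (top_of_set (A \<union> B)) B"
      unfolding Z[symmetric] using clB by (simp add: B_def closedin_closed_Int)
    show "continuous_on A (\<lambda>z. Complex (1 - fst (fst z)) (snd (fst z)))"
      by (intro continuous_intros)
    show "continuous_on B (\<lambda>z. 1)" by simp
    fix z assume H: "z \<in> A \<and> \<not> (fst z \<in> HE_circle 1 \<and> dist (snd z) tpi < pi) \<or>
        z \<in> B \<and> (fst z \<in> HE_circle 1 \<and> dist (snd z) tpi < pi)"
    have ex: "exp (snd z) = 1" if "z \<in> Zset n" "fst z \<in> HE_circle 1"
      using that qn_other[of 1 n "fst z"] n unfolding Zset_def by auto
    from H show "Complex (1 - fst (fst z)) (snd (fst z)) = 1"
    proof
      assume a: "z \<in> A \<and> \<not> (fst z \<in> HE_circle 1 \<and> dist (snd z) tpi < pi)"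
      hence "exp (snd z) = 1" using ex unfolding A_def by auto
      hence "snd z = tpi \<or> dist (snd z) tpi \<ge> 2 * pi" by (rule exp1_cases)
      moreover have "dist (snd z) tpi \<le> pi" "\<not> dist (snd z) tpi < pi" using a unfolding A_def
        by (auto simp: dist_commute)
      ultimately have False using pi_gt_zero by auto
      thus ?thesis ..
    next
      assume a: "z \<in> B \<and> (fst z \<in> HE_circle 1 \<and> dist (snd z) tpi < pi)"
      hence "fst z \<in> cb 2" using a unfolding B_def by (auto simp: dist_commute)
      hence "fst z = (0, 0)" using circle_cb_zero[of 1 "fst z"] a by (simp add: numeral_2_eq_2)
      thus ?thesis by (simp add: one_complex.code)
    qed
  qed
  thus ?thesis using Z eqPhi by simp
qed

lemma cov_exp: "covering_space UNIV (\<lambda>z::complex. exp z) (- {0})"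
  by (rule covering_space_exp_punctured_plane)

lemma INV:
  assumes n: "n \<ge> 2"
    and hom: "homotopic_paths Y1 g0 g1"
    and s0: "g0 0 = (0, 0)" and f0: "g0 1 = (0, 0)"
    and K0: "continuous_on {0..1} K0" "K0 0 = 0" "\<And>t. t \<in> {0..1} \<Longrightarrow> exp (K0 t) = qn n (g0 t)"
    and K1: "continuous_on {0..1} K1" "K1 0 = 0" "\<And>t. t \<in> {0..1} \<Longrightarrow> exp (K1 t) = qn n (g1 t)"
    and L0: "continuous_on {0..1} L0" "L0 0 = 0" "\<And>t. t \<in> {0..1} \<Longrightarrow> exp (L0 t) = Phi (g0 t, K0 t)"
    and L1: "continuous_on {0..1} L1" "L1 0 = 0" "\<And>t. t \<in> {0..1} \<Longrightarrow> exp (L1 t) = Phi (g1 t, K1 t)"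
  shows "L0 1 = L1 1"
proof -
  obtain H :: "real \<times> real \<Rightarrow> real \<times> real"
     where conth: "continuous_on ({0..1} \<times> {0..1}) H"
       and him: "H \<in> ({0..1} \<times> {0..1}) \<rightarrow> Y1"
       and h0: "\<And>x. H (0, x) = g0 x" and h1: "\<And>x. H (1, x) = g1 x"
       and heq0: "\<And>t. t \<in> {0..1} \<Longrightarrow> H (t, 0) = g0 0"
       and heq1: "\<And>t. t \<in> {0..1} \<Longrightarrow> H (t, 1) = g0 1"
    using hom by (auto simp: homotopic_paths_def homotopic_with_def pathstart_def pathfinish_def image_subset_iff_funcset)
  have g0im: "g0 t \<in> Y1" if "t \<in> {0..1}" for t using funcset_mem[OF him, of "(0,t)"] that h0 by auto
  have g1im: "g1 t \<in> Y1" if "t \<in> {0..1}" for t using funcset_mem[OF him, of "(1,t)"] that h1 by auto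
  have contg0: "continuous_on {0..1} g0"
  proof -
    have "continuous_on {0..1} (\<lambda>x. H (0, x))"
      by (intro continuous_on_compose2[OF conth] continuous_intros) auto
    thus ?thesis using h0 by simp
  qed
  have contg1: "continuous_on {0..1} g1"
  proof -
    have "continuous_on {0..1} (\<lambda>x. H (1, x))"
      by (intro continuous_on_compose2[OF conth] continuous_intros) auto
    thus ?thesis using h1 by simp
  qed
  have qc: "continuous_on Y1 (qn n)" using qn_cont[OF n] .
  have n1: "n \<ge> 1" using n by simp
  have contqH: "continuous_on ({0..1} \<times> {0..1}) (\<lambda>z. qn n (H z))"
    by (rule continuous_on_compose2[OF qc conth]) (use him in auto)
  obtain k where contk: "continuous_on ({0..1} \<times> {0..1}) k"
      and k0: "\<And>y. y \<in> {0..1} \<Longrightarrow> k (y, 0) = 0"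
      and hk: "\<And>z. z \<in> {0..1} \<times> {0..1} \<Longrightarrow> qn n (H z) = exp (k z)"
  proof (rule covering_space_lift_homotopy_alt[OF cov_exp contqH, of "\<lambda>_. 0"])
    show "(\<lambda>z. qn n (H z)) \<in> {0..1} \<times> {0..1} \<rightarrow> - {0}" using qn_nonzero[OF n1] by auto
    show "\<And>y. y \<in> {0..1} \<Longrightarrow> qn n (H (y, 0)) = exp 0"
      using heq0 s0 qn_zero[OF n1] by simp
  qed auto
  have kK0: "k (0, x) = K0 x" if x: "x \<in> {0..1}" for x
  proof (rule covering_space_lift_unique[OF cov_exp, of "\<lambda>a. k (0, a)" 0 K0 "{0..1}" "\<lambda>t. qn n (g0 t)"])
    show "k (0, 0) = K0 0" using k0 K0 by simp
    show "continuous_on {0..1} (\<lambda>t. qn n (g0 t))"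
      by (rule continuous_on_compose2[OF qc contg0]) (use g0im in auto)
    show "(\<lambda>t. qn n (g0 t)) \<in> {0..1} \<rightarrow> - {0}" using qn_nonzero[OF n1] by auto
    show "continuous_on {0..1} (\<lambda>a. k (0, a))"
      by (intro continuous_intros continuous_on_compose2 [OF contk]) auto
    show "qn n (g0 t) = exp (k (0, t))" if "t \<in> {0..1}" for t
      using hk[of "(0, t)"] h0 that by auto
  qed (use K0 x in auto)
  have kK1: "k (1, x) = K1 x" if x: "x \<in> {0..1}" for x
  proof (rule covering_space_lift_unique[OF cov_exp, of "\<lambda>a. k (1, a)" 0 K1 "{0..1}" "\<lambda>t. qn n (g1 t)"])
    show "k (1, 0) = K1 0" using k0 K1 by simp
    show "continuous_on {0..1} (\<lambda>t. qn n (g1 t))"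
      by (rule continuous_on_compose2[OF qc contg1]) (use g1im in auto)
    show "(\<lambda>t. qn n (g1 t)) \<in> {0..1} \<rightarrow> - {0}" using qn_nonzero[OF n1] by auto
    show "continuous_on {0..1} (\<lambda>a. k (1, a))"
      by (intro continuous_intros continuous_on_compose2 [OF contk]) auto
    show "qn n (g1 t) = exp (k (1, t))" if "t \<in> {0..1}" for t
      using hk[of "(1, t)"] h1 that by auto
  qed (use K1 x in auto)
  have Zin: "(H z, k z) \<in> Zset n" if "z \<in> {0..1} \<times> {0..1}" for z
    using him hk that unfolding Zset_def by auto
  have contG: "continuous_on ({0..1} \<times> {0..1}) (\<lambda>z. Phi (H z, k z))"
    by (rule continuous_on_compose2[OF Phi_cont[OF n]]) (use Zin in \<open>auto intro!: continuous_intros conth contk\<close>)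
  obtain l where contl: "continuous_on ({0..1} \<times> {0..1}) l"
      and l0: "\<And>y. y \<in> {0..1} \<Longrightarrow> l (y, 0) = 0"
      and hl: "\<And>z. z \<in> {0..1} \<times> {0..1} \<Longrightarrow> Phi (H z, k z) = exp (l z)"
  proof (rule covering_space_lift_homotopy_alt[OF cov_exp contG, of "\<lambda>_. 0"])
    show "(\<lambda>z. Phi (H z, k z)) \<in> {0..1} \<times> {0..1} \<rightarrow> - {0}" using Phi_nonzero by auto
    show "\<And>y. y \<in> {0..1} \<Longrightarrow> Phi (H (y, 0), k (y, 0)) = exp 0"
      using heq0 s0 Phi_zero by simp
  qed auto
  have contPhi: "continuous_on (Zset n) Phi" using Phi_cont[OF n] .
  have lL0: "l (0, x) = L0 x" if x: "x \<in> {0..1}" for x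
  proof (rule covering_space_lift_unique[OF cov_exp, of "\<lambda>a. l (0, a)" 0 L0 "{0..1}" "\<lambda>t. Phi (H (0, t), k (0, t))"])
    show "l (0, 0) = L0 0" using l0 L0 by simp
    show "continuous_on {0..1} (\<lambda>t. Phi (H (0, t), k (0, t)))"
      by (rule continuous_on_compose2[OF contG]) (auto intro!: continuous_intros)
    show "(\<lambda>t. Phi (H (0, t), k (0, t))) \<in> {0..1} \<rightarrow> - {0}" using Phi_nonzero by auto
    show "continuous_on {0..1} (\<lambda>a. l (0, a))"
      by (intro continuous_intros continuous_on_compose2 [OF contl]) auto
    show "Phi (H (0, t), k (0, t)) = exp (l (0, t))" if "t \<in> {0..1}" for t
      using hl[of "(0, t)"] that by auto
    show "\<And>t. t \<in> {0..1} \<Longrightarrow> Phi (H (0, t), k (0, t)) = exp (L0 t)"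
      using L0 kK0 h0 by simp
  qed (use L0 x in auto)
  have lL1: "l (1, x) = L1 x" if x: "x \<in> {0..1}" for x
  proof (rule covering_space_lift_unique[OF cov_exp, of "\<lambda>a. l (1, a)" 0 L1 "{0..1}" "\<lambda>t. Phi (H (1, t), k (1, t))"])
    show "l (1, 0) = L1 0" using l0 L1 by simp
    show "continuous_on {0..1} (\<lambda>t. Phi (H (1, t), k (1, t)))"
      by (rule continuous_on_compose2[OF contG]) (auto intro!: continuous_intros)
    show "(\<lambda>t. Phi (H (1, t), k (1, t))) \<in> {0..1} \<rightarrow> - {0}" using Phi_nonzero by auto
    show "continuous_on {0..1} (\<lambda>a. l (1, a))"
      by (intro continuous_intros continuous_on_compose2 [OF contl]) auto
    show "Phi (H (1, t), k (1, t)) = exp (l (1, t))" if "t \<in> {0..1}" for t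
      using hl[of "(1, t)"] that by auto
    show "\<And>t. t \<in> {0..1} \<Longrightarrow> Phi (H (1, t), k (1, t)) = exp (L1 t)"
      using L1 kK1 h1 by simp
  qed (use L1 x in auto)
  have lconst: "l (1, 1) = l (0, 1)"
  proof (rule covering_space_lift_unique[OF cov_exp, of "\<lambda>a. l (a, 1)" 0 "\<lambda>_. l (0, 1)" "{0..1}" "\<lambda>_. 1"])
    show "continuous_on {0..1} (\<lambda>a. l (a, 1))"
      by (intro continuous_intros continuous_on_compose2 [OF contl]) auto
    show "\<And>t. t \<in> {0..1} \<Longrightarrow> 1 = exp (l (t, 1))"
      using hl[of "(t, 1)" for t] heq1 f0 Phi_zero by force
    show "\<And>t. t \<in> {0..1} \<Longrightarrow> 1 = exp (l (0, 1))"
      using hl[of "(0, 1)"] heq1 f0 Phi_zero by force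
  qed auto
  show ?thesis using lconst lL0 lL1 by simp
qed

lemma hu_int: "hu (real j) = (0, 0)"
proof -
  have "2 * pi * real j = 2 * real j * pi" by simp
  thus ?thesis unfolding hu_def by (simp only:) simp
qed

lemma hcirc_int: "hcirc m (real j) = (0, 0)"
  by (simp add: hcirc_def hu_int)

definition Fs :: "nat set \<Rightarrow> real \<Rightarrow> real \<times> real" where
  "Fs S x = (if nat \<lfloor>x\<rfloor> \<in> S then hcirc (nat \<lfloor>x\<rfloor> + 3) x else (0, 0))"

definition Gk :: "nat set \<Rightarrow> nat \<Rightarrow> real \<Rightarrow> real \<times> real" where
  "Gk S k x = (if k \<in> S then hcirc (k + 3) x else (0, 0))"

lemma cont_hcirc: "continuous_on A (hcirc m)"
  unfolding hcirc_def hu_def by (intro continuous_intros)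

lemma cont_Gk: "continuous_on A (Gk S k)"
  unfolding Gk_def by (cases "k \<in> S") (auto intro: cont_hcirc)

lemma Fs_piece: "x \<in> {real k..real k + 1} \<Longrightarrow> Fs S x = Gk S k x"
proof -
  assume x: "x \<in> {real k..real k + 1}"
  show ?thesis
  proof (cases "x = real k + 1")
    case True
    have "x = real (Suc k)" using True by simp
    thus ?thesis by (simp only: Fs_def Gk_def hcirc_int if_cancel)
  next
    case False
    hence "\<lfloor>x\<rfloor> = int k" using x by (intro floor_unique) auto
    thus ?thesis by (simp add: Fs_def Gk_def)
  qed
qed

lemma Fs_piece0: "x \<in> {-1..1} \<Longrightarrow> Fs S x = Gk S 0 x"
proof -
  assume x: "x \<in> {-1..1}"
  show ?thesis
  proof (cases "x \<ge> 0")
    case True thus ?thesis using Fs_piece[of x 0] x by simp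
  next
    case False
    hence "\<lfloor>x\<rfloor> \<le> 0" by linarith
    hence "nat \<lfloor>x\<rfloor> = 0" by simp
    thus ?thesis by (simp add: Fs_def Gk_def)
  qed
qed

lemma cont_Fs_N: "continuous_on {-1..real N + 1} (Fs S)"
proof (induction N)
  case 0
  show ?case using Fs_piece0 by (intro continuous_on_eq[OF cont_Gk]) auto
next
  case (Suc N)
  have "{-1..real (Suc N) + 1} = {-1..real N + 1} \<union> {real (Suc N)..real (Suc N) + 1}" by auto
  moreover have "continuous_on {real (Suc N)..real (Suc N) + 1} (Fs S)"
    using Fs_piece[of _ "Suc N" S] by (intro continuous_on_eq[OF cont_Gk]) auto
  hence "continuous_on ({-1..real N + 1} \<union> {real (Suc N)..real (Suc N) + 1}) (Fs S)"
    by (rule continuous_on_closed_Un[OF closed_atLeastAtMost closed_atLeastAtMost Suc.IH])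
  ultimately show ?case by (simp only:)
qed

lemma isCont_Fs: "x > -1 \<Longrightarrow> isCont (Fs S) x"
proof -
  assume x: "x > -1"
  obtain N :: nat where N0: "x < real N" using reals_Archimedean2 by blast
  hence N: "x < real N + 1" by simp
  show ?thesis using continuous_on_interior[OF cont_Fs_N[of N S]] x N by simp
qed

definition ws :: "nat set \<Rightarrow> real \<Rightarrow> real \<times> real" where
  "ws S t = (if t < 1 then Fs S (t / (1 - t)) else (0, 0))"

lemma norm_hu: "norm (hu x) \<le> 2"
proof -
  have "fst (hu x) ^ 2 + snd (hu x) ^ 2 = 2 - 2 * cos (2*pi*x)"
  proof -
    have "(1 - cos (2*pi*x))^2 + (sin (2*pi*x))^2 = 1 - 2 * cos (2*pi*x) + ((sin (2*pi*x))^2 + (cos (2*pi*x))^2)"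
      by (simp add: power2_eq_square algebra_simps)
    thus ?thesis by (simp add: hu_def)
  qed
  also have "\<dots> \<le> 2 ^ 2"
  proof -
    have "- 1 \<le> cos (2*pi*x)" by simp
    hence "2 - 2 * cos (2*pi*x) \<le> 4" by linarith
    thus ?thesis by simp
  qed
  finally have "sqrt (fst (hu x) ^ 2 + snd (hu x) ^ 2) \<le> sqrt (2 ^ 2)" by (rule real_sqrt_le_mono)
  thus ?thesis by (simp add: norm_Pair norm_prod_def)
qed

lemma norm_ws: "t \<in> {0..1} \<Longrightarrow> norm (ws S t) \<le> 2 * (1 - t)"
proof (cases "t < 1")
  case True
  assume t: "t \<in> {0..1}"
  define x where "x = t / (1 - t)"
  have x0: "x \<ge> 0" using t True by (simp add: x_def)
  have x1: "x + 1 = 1 / (1 - t)" using True by (simp add: x_def field_simps)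
  define j where "j = nat \<lfloor>x\<rfloor>"
  have jx: "real j + 1 > x" using x0 unfolding j_def by linarith
  have "norm (Fs S x) \<le> 2 / real (j + 3)"
  proof (cases "j \<in> S")
    case True
    hence "norm (Fs S x) = norm (hu x) / real (j + 3)"
      by (simp add: Fs_def j_def[symmetric] hcirc_def)
    also have "\<dots> \<le> 2 / real (j + 3)" using norm_hu by (intro divide_right_mono) auto
    finally show ?thesis .
  qed (simp add: Fs_def j_def[symmetric])
  also have "\<dots> \<le> 2 / (x + 1)" using jx x0 by (intro divide_left_mono) auto
  also have "\<dots> = 2 / (1 / (1 - t))" by (simp only: x1)
  also have "\<dots> = 2 * (1 - t)" by simp
  finally show ?thesis using True by (simp add: ws_def x_def)
qed (simp add: ws_def)

lemma cont_ws: "continuous_on {0..1} (ws S)"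
proof -
  show ?thesis unfolding continuous_on_eq_continuous_within
  proof (intro ballI)
  fix t :: real assume t: "t \<in> {0..1}"
  show "continuous (at t within {0..1}) (ws S)"
  proof (cases "t < 1")
    case True
    have c1: "isCont (\<lambda>t. t / (1 - t)) t"
      using True by (intro continuous_intros) auto
    have gt: "-1 < t / (1 - t)" using True by (simp add: field_simps)
    have "isCont (\<lambda>t. Fs S (t / (1 - t))) t"
      by (rule isCont_o2[OF c1 isCont_Fs[OF gt]])
    moreover have ev: "eventually (\<lambda>x. ws S x = Fs S (x / (1 - x))) (nhds t)"
    proof -
      have "eventually (\<lambda>x. x \<in> {..<1}) (nhds t)"
        by (rule eventually_nhds_in_open) (use True in auto)
      thus ?thesis by (rule eventually_mono) (simp add: ws_def)
    qed
    ultimately have "isCont (ws S) t" using isCont_cong[OF ev] by simp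
    thus ?thesis by (rule continuous_at_imp_continuous_at_within)
  next
    case False
    hence t1: "t = 1" using t by simp
    have "(ws S \<longlongrightarrow> 0) (at 1 within {0..1})"
    proof (rule Lim_null_comparison)
      show "eventually (\<lambda>x. norm (ws S x) \<le> 2 * (1 - x)) (at 1 within {0..1})"
        using norm_ws by (auto simp: eventually_at_filter)
      have "((\<lambda>x::real. 2 * (1 - x)) \<longlongrightarrow> 2 * (1 - 1)) (at 1 within {0..1})"
        by (intro tendsto_intros)
      thus "((\<lambda>x::real. 2 * (1 - x)) \<longlongrightarrow> 0) (at 1 within {0..1})" by simp
    qed
    moreover have "ws S 1 = 0" by (simp add: ws_def zero_prod_def)
    ultimately show ?thesis unfolding t1 continuous_within by simp
  qed
  qed
qed

definition islift :: "('a \<Rightarrow> complex) \<Rightarrow> (real \<Rightarrow> 'a) \<Rightarrow> (real \<Rightarrow> complex) \<Rightarrow> bool" where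
  "islift F g K \<longleftrightarrow> continuous_on {0..1} K \<and> K 0 = 0 \<and> (\<forall>t\<in>{0..1}. exp (K t) = F (g t))"

lemma islift_join:
  assumes a: "islift F a Ka" and b: "islift F b Kb" and e: "exp (Ka 1) = 1"
  shows "islift F (a +++ b) (Ka +++ (\<lambda>t. Ka 1 + Kb t))"
  unfolding islift_def
proof (intro conjI ballI)
  show "continuous_on {0..1} (Ka +++ (\<lambda>t. Ka 1 + Kb t))"
    using a b unfolding islift_def path_def[symmetric]
    by (intro path_join_imp) (auto simp: path_def pathstart_def pathfinish_def intro!: continuous_intros)
  show "(Ka +++ (\<lambda>t. Ka 1 + Kb t)) 0 = 0" using a by (simp add: joinpaths_def islift_def)
  fix t :: real assume t: "t \<in> {0..1}"
  show "exp ((Ka +++ (\<lambda>t. Ka 1 + Kb t)) t) = F ((a +++ b) t)"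
  proof (cases "t \<le> 1/2")
    case True thus ?thesis using a t by (simp add: joinpaths_def islift_def)
  next
    case False
    hence "2 * t - 1 \<in> {0..1}" using t by auto
    thus ?thesis using b e False by (simp add: joinpaths_def islift_def exp_add)
  qed
qed

lemma islift_rev:
  assumes a: "islift F a Ka" and e: "exp (Ka 1) = 1"
  shows "islift F (reversepath a) (\<lambda>t. Ka (1 - t) - Ka 1)"
  unfolding islift_def
proof (intro conjI ballI)
  have "continuous_on {0..1} (reversepath Ka)"
    using a path_reversepath[of Ka] unfolding islift_def path_def by blast
  thus "continuous_on {0..1} (\<lambda>t. Ka (1 - t) - Ka 1)"
    unfolding reversepath_def by (intro continuous_intros)
  show "Ka (1 - 0) - Ka 1 = 0" by simp
  fix t :: real assume t: "t \<in> {0..1}"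
  hence "1 - t \<in> {0..1}" by auto
  thus "exp (Ka (1 - t) - Ka 1) = F (reversepath a t)"
    using a e by (simp add: islift_def exp_diff reversepath_def)
qed

lemma islift_const:
  assumes "\<And>t. t \<in> {0..1} \<Longrightarrow> F (g t) = 1"
  shows "islift F g (\<lambda>_. 0)"
  using assms by (simp add: islift_def)

lemma islift_cong:
  assumes "islift F g K" "\<And>t. t \<in> {0..1} \<Longrightarrow> g t = g' t"
  shows "islift F g' K"
  using assms by (simp add: islift_def)

definition pp :: "(real \<Rightarrow> 'a) \<Rightarrow> (real \<Rightarrow> 'b) \<Rightarrow> real \<Rightarrow> 'a \<times> 'b" where
  "pp a b = (\<lambda>t. (a t, b t))"

lemma pp_join: "pp (a +++ b) (c +++ d) = pp a c +++ pp b d"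
  by (auto simp: pp_def joinpaths_def fun_eq_iff)

lemma shift_join: "(\<lambda>t. h + (c +++ d) t) = (\<lambda>t. h + c t) +++ (\<lambda>t. h + d t)"
  by (auto simp: joinpaths_def fun_eq_iff)

lemma const_join: "(\<lambda>t. c) = (\<lambda>t. c) +++ (\<lambda>t. c)"
  by (auto simp: joinpaths_def fun_eq_iff)

definition rho :: "nat \<Rightarrow> real \<Rightarrow> real" where
  "rho k t = (if t \<le> (real k + 1) / (real k + 2) then max 0 (t / (1 - t) - real k) else 1)"

definition Kw :: "nat \<Rightarrow> nat set \<Rightarrow> real \<Rightarrow> complex" where
  "Kw k S t = (if k \<in> S then tpi * complex_of_real (rho k t) else 0)"

lemma le_iff_sigma: "t < 1 \<Longrightarrow> (t \<le> (real k + 1) / (real k + 2)) \<longleftrightarrow> t / (1 - t) \<le> real k + 1"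
  by (simp add: field_simps)

lemma rho_lt1: "t < 1 \<Longrightarrow> rho k t = min 1 (max 0 (t / (1 - t) - real k))"
  using le_iff_sigma[of t k] by (auto simp: rho_def)

lemma rho_1: "rho k 1 = 1"
proof -
  have "(real k + 1) / (real k + 2) < 1" by (simp add: field_simps)
  thus ?thesis by (simp add: rho_def)
qed

lemma rho_0: "rho k 0 = 0"
  by (simp add: rho_def)

lemma cont_rho: "continuous_on {0..1} (rho k)"
proof -
  define a where "a = (real k + 1) / (real k + 2)"
  have a1: "a < 1" "0 \<le> a" by (simp_all add: a_def field_simps)
  have "continuous_on ({0..a} \<union> {a..1}) (\<lambda>t. if t \<le> a then max 0 (t / (1 - t) - real k) else 1)"
  proof (rule continuous_on_cases)
    show "continuous_on {0..a} (\<lambda>t. max 0 (t / (1 - t) - real k))"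
      using a1 by (intro continuous_intros) auto
    show "\<forall>t. t \<in> {0..a} \<and> \<not> t \<le> a \<or> t \<in> {a..1} \<and> t \<le> a \<longrightarrow> max 0 (t / (1 - t) - real k) = 1"
    proof (intro allI impI)
    fix t assume "t \<in> {0..a} \<and> \<not> t \<le> a \<or> t \<in> {a..1} \<and> t \<le> a"
    hence t: "t = a" by auto
    have ne: "1 - t \<noteq> 0" using t a1 by simp
    have "t * (real k + 2) = real k + 1" using t by (simp add: a_def field_simps)
    hence "t = (real k + 1) * (1 - t)" by (simp add: algebra_simps)
    hence "t / (1 - t) = real k + 1" using ne by (simp add: divide_eq_eq)
    thus "max 0 (t / (1 - t) - real k) = 1" by simp
    qed
  qed auto
  moreover have "{0..a} \<union> {a..1} = {0..1}" using a1 by auto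
  ultimately show ?thesis by (simp add: rho_def a_def)
qed

lemma exp_tpi: "exp (tpi * complex_of_real x) = exp (\<i> * complex_of_real (2 * pi * x))"
  by (simp add: tpi_def mult_ac)

lemma exp_tpi_shift: "exp (tpi * complex_of_real (x - real k)) = exp (tpi * complex_of_real x)"
proof (subst exp_eq, rule exI[of _ "- int k"])
  show "tpi * complex_of_real (x - real k) = tpi * complex_of_real x + complex_of_real (real_of_int (2 * - int k) * pi) * \<i>"
    by (simp add: tpi_def algebra_simps)
qed

lemma exp_tpi1: "exp tpi = 1"
  by (simp add: tpi_def exp_eq_1)

lemma ws_cases: "t \<in> {0..1} \<Longrightarrow> ws S t = (0, 0) \<or> (\<exists>j \<in> S. ws S t = hcirc (j + 3) (t / (1 - t)) \<and> t < 1 \<and> j = nat \<lfloor>t / (1 - t)\<rfloor>)"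
  by (auto simp: ws_def Fs_def)

lemma ws_in: "t \<in> {0..1} \<Longrightarrow> \<exists>m\<ge>3. ws S t \<in> HE_circle m"
proof -
  assume t: "t \<in> {0..1}"
  show ?thesis
  proof (cases "ws S t = (0, 0)")
    case True thus ?thesis using zero_in_circle[of 3] by (intro exI[of _ 3]) simp
  next
    case False
    then obtain j where "ws S t = hcirc (j + 3) (t / (1 - t))" using ws_cases[OF t, of S] by blast
    thus ?thesis using hcirc_in[of "j + 3" "t / (1 - t)"] by (intro exI[of _ "j + 3"]) simp
  qed
qed

lemma Kw_lift: "islift (qn (k + 3)) (ws S) (Kw k S)"
  unfolding islift_def
proof (intro conjI ballI)
  show "continuous_on {0..1} (Kw k S)"
  proof (cases "k \<in> S")
    case True
    have "continuous_on {0..1} (\<lambda>t. tpi * complex_of_real (rho k t))"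
      by (intro continuous_on_mult_left continuous_on_of_real cont_rho)
    thus ?thesis using True by (simp add: Kw_def)
  qed (simp add: Kw_def)
  show "Kw k S 0 = 0" by (simp add: Kw_def rho_0)
  fix t :: real assume t: "t \<in> {0..1}"
  have q1: "qn (k + 3) (ws S t) = 1" if "ws S t \<notin> HE_circle (k + 3) - {(0,0)}"
  proof -
    obtain m where m: "m \<ge> 3" "ws S t \<in> HE_circle m" using ws_in[OF t] by blast
    show ?thesis
    proof (cases "m = k + 3")
      case True
      hence "ws S t = (0, 0)" using that m by auto
      thus ?thesis using qn_zero[of "k+3"] by simp
    next
      case False
      thus ?thesis using qn_other[of m "k+3" "ws S t"] m by simp
    qed
  qed
  show "exp (Kw k S t) = qn (k + 3) (ws S t)"
  proof (cases "k \<in> S")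
    case False
    have "ws S t \<notin> HE_circle (k + 3) - {(0,0)}"
    proof
      assume H: "ws S t \<in> HE_circle (k + 3) - {(0,0)}"
      then obtain j where j: "j \<in> S" "ws S t = hcirc (j + 3) (t / (1 - t))"
        using ws_cases[OF t, of S] by auto
      have "j + 3 = k + 3"
      proof (rule ccontr)
        assume "j + 3 \<noteq> k + 3"
        thus False using circle_inter[of "j+3" "k+3" "ws S t"] hcirc_in[of "j+3"] j H by auto
      qed
      thus False using j False by simp
    qed
    thus ?thesis using q1 False by (simp add: Kw_def)
  next
    case kS: True
    show ?thesis
    proof (cases "t < 1")
      case False
      hence "t = 1" using t by simp
      thus ?thesis using qn_zero[of "k+3"] kS by (simp add: Kw_def rho_1 ws_def exp_tpi1)
    next
      case True
      define x where "x = t / (1 - t)"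
      have x0: "x \<ge> 0" using t True by (simp add: x_def)
      define j where "j = nat \<lfloor>x\<rfloor>"
      have jx: "real j \<le> x" "x < real j + 1" using x0 unfolding j_def by linarith+
      have wsx: "ws S t = Fs S x" using True by (simp add: ws_def x_def)
      have rx: "rho k t = min 1 (max 0 (x - real k))" using rho_lt1[OF True] by (simp add: x_def)
      consider "j = k" | "j < k" | "j > k" by linarith
      thus ?thesis
      proof cases
        case 1
        have "ws S t = hcirc (k + 3) x" using wsx kS 1 by (simp add: Fs_def j_def[symmetric])
        hence qx: "qn (k + 3) (ws S t) = exp (\<i> * complex_of_real (2 * pi * x))"
          using qn_hcirc[of "k + 3" x] by simp
        have "rho k t = x - real k" using rx jx 1 by simp
        hence "exp (Kw k S t) = exp (tpi * complex_of_real (x - real k))" using kS by (simp only: Kw_def if_True)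
        also have "\<dots> = exp (\<i> * complex_of_real (2 * pi * x))" by (rule trans[OF exp_tpi_shift exp_tpi])
        finally show ?thesis using qx by simp
      next
        case 2
        have "x < real k" using jx 2 by linarith
        hence "rho k t = 0" using rx by simp
        moreover have "ws S t \<notin> HE_circle (k + 3) - {(0,0)}"
        proof
          assume H: "ws S t \<in> HE_circle (k + 3) - {(0,0)}"
          have "j \<in> S" "ws S t = hcirc (j + 3) x"
            using H wsx by (auto simp: Fs_def j_def[symmetric] split: if_splits)
          thus False using circle_inter[of "j+3" "k+3" "ws S t"] hcirc_in[of "j+3"] H 2 by auto
        qed
        ultimately show ?thesis using q1 kS by (simp add: Kw_def)
      next
        case 3
        have "x \<ge> real k + 1" using jx 3 by linarith
        hence "rho k t = 1" using rx by simp
        moreover have "ws S t \<notin> HE_circle (k + 3) - {(0,0)}"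
        proof
          assume H: "ws S t \<in> HE_circle (k + 3) - {(0,0)}"
          have "j \<in> S" "ws S t = hcirc (j + 3) x"
            using H wsx by (auto simp: Fs_def j_def[symmetric] split: if_splits)
          thus False using circle_inter[of "j+3" "k+3" "ws S t"] hcirc_in[of "j+3"] H 3 by auto
        qed
        ultimately show ?thesis using q1 kS by (simp add: Kw_def exp_tpi1)
      qed
    qed
  qed
qed

lemma Kw_1: "Kw k S 1 = (if k \<in> S then tpi else 0)"
  by (simp add: Kw_def rho_1)

definition cS :: "real \<Rightarrow> real \<times> real" where
  "cS = hcirc 1 +++ reversepath (hcirc 2)"

definition gS :: "nat set \<Rightarrow> real \<Rightarrow> real \<times> real" where
  "gS S = ws S +++ (cS +++ reversepath (ws S))"

definition gN :: "nat set \<Rightarrow> real \<Rightarrow> real \<times> real" where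
  "gN S t = (if t \<in> {0..1} then gS S t else (0, 0))"

definition K1 :: "nat \<Rightarrow> nat set \<Rightarrow> real \<Rightarrow> complex" where
  "K1 k S = Kw k S +++ (\<lambda>t. Kw k S 1 + ((\<lambda>_. 0) +++ (\<lambda>t. 0 + (Kw k S (1 - t) - Kw k S 1))) t)"

lemma hcirc_0: "hcirc m 0 = (0, 0)" using hcirc_int[of m 0] by simp
lemma hcirc_1: "hcirc m 1 = (0, 0)" using hcirc_int[of m 1] by simp

lemma ws_0: "ws S 0 = (0, 0)"
  by (simp add: ws_def Fs_def hcirc_0)
lemma ws_1: "ws S 1 = (0, 0)"
  by (simp add: ws_def)

lemma cS_in: "t \<in> {0..1} \<Longrightarrow> cS t \<in> HE_circle 1 \<or> cS t \<in> HE_circle 2"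
  by (simp add: cS_def joinpaths_def reversepath_def hcirc_in)

lemma Phi_other: "m \<ge> 2 \<Longrightarrow> p \<in> HE_circle m \<Longrightarrow> Phi (p, w) = 1"
proof -
  assume m: "m \<ge> 2" and p: "p \<in> HE_circle m"
  show ?thesis
  proof (cases "p \<in> HE_circle 1")
    case True
    hence "p = (0, 0)" using circle_inter[of m 1 p] m p by simp
    thus ?thesis by (simp add: Phi_zero)
  qed (simp add: Phi_def)
qed

lemma exp_Kw1: "exp (Kw k S 1) = 1"
  by (simp add: Kw_1 exp_tpi1)

lemma lift1: "islift (qn (k + 3)) (gS S) (K1 k S)"
proof -
  have c: "islift (qn (k + 3)) cS (\<lambda>_. 0)"
  proof (rule islift_const)
    fix t :: real assume t: "t \<in> {0..1}"
    from cS_in[OF t] show "qn (k + 3) (cS t) = 1"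
    proof
      assume "cS t \<in> HE_circle 1" thus ?thesis by (intro qn_other[of 1]) simp_all
    next
      assume "cS t \<in> HE_circle 2" thus ?thesis by (intro qn_other[of 2]) simp_all
    qed
  qed
  have r: "islift (qn (k + 3)) (reversepath (ws S)) (\<lambda>t. Kw k S (1 - t) - Kw k S 1)"
    by (rule islift_rev[OF Kw_lift exp_Kw1])
  have cr: "islift (qn (k + 3)) (cS +++ reversepath (ws S)) ((\<lambda>_. 0) +++ (\<lambda>t. 0 + (Kw k S (1 - t) - Kw k S 1)))"
  proof -
    have e: "exp ((\<lambda>_. 0::complex) 1) = 1" by simp
    show ?thesis using islift_join[OF c r e] by simp
  qed
  show ?thesis unfolding gS_def K1_def
    by (rule islift_join[OF Kw_lift cr exp_Kw1])
qed

definition LX :: "complex \<Rightarrow> real \<Rightarrow> complex" where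
  "LX h = (if dist h tpi < pi then (\<lambda>t. tpi * complex_of_real t) else (\<lambda>_. 0))"

lemma LX_lift: "islift Phi (pp (hcirc 1) (\<lambda>t. h + 0)) (LX h)"
  unfolding islift_def
proof (intro conjI ballI)
  show "continuous_on {0..1} (LX h)" unfolding LX_def by (auto intro!: continuous_intros)
  show "LX h 0 = 0" by (simp add: LX_def)
  fix t :: real assume t: "t \<in> {0..1}"
  show "exp (LX h t) = Phi (pp (hcirc 1) (\<lambda>t. h + 0) t)"
    using hcirc_in[of 1 t] qn_hcirc[of 1 t]
    by (simp add: LX_def Phi_def pp_def exp_tpi)
qed

lemma LX_1: "LX h 1 = (if dist h tpi < pi then tpi else 0)"
  by (simp add: LX_def)

lemma exp_LX1: "exp (LX h 1) = 1"
  by (simp add: LX_1 exp_tpi1)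

lemma lift2: "\<exists>L. islift Phi (pp (gS S) (K1 k S)) L \<and> L 1 = (if k \<in> S then tpi else 0)"
proof -
  define h where "h = Kw k S 1"
  define Krw where "Krw = (\<lambda>t. Kw k S (1 - t) - h)"
  have eq: "pp (gS S) (K1 k S) = pp (ws S) (Kw k S) +++
      ((pp (hcirc 1) (\<lambda>t. h + 0) +++ pp (reversepath (hcirc 2)) (\<lambda>t. h + 0))
       +++ pp (reversepath (ws S)) (\<lambda>t. h + (0 + Krw t)))"
  proof -
    have "K1 k S = Kw k S +++ (((\<lambda>t. h + 0) +++ (\<lambda>t. h + 0)) +++ (\<lambda>t. h + (0 + Krw t)))"
      by (simp add: fun_eq_iff joinpaths_def K1_def Krw_def h_def)
    thus ?thesis unfolding gS_def cS_def by (simp only: pp_join)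
  qed
  have Lw: "islift Phi (pp (ws S) (Kw k S)) (\<lambda>_. 0)"
  proof (rule islift_const)
    fix t :: real assume t: "t \<in> {0..1}"
    obtain m where "m \<ge> 3" "ws S t \<in> HE_circle m" using ws_in[OF t] by blast
    thus "Phi (pp (ws S) (Kw k S) t) = 1" using Phi_other[of m] by (simp add: pp_def)
  qed
  have L2: "islift Phi (pp (reversepath (hcirc 2)) (\<lambda>t. h + 0)) (\<lambda>_. 0)"
  proof (rule islift_const)
    fix t :: real assume t: "t \<in> {0..1}"
    show "Phi (pp (reversepath (hcirc 2)) (\<lambda>t. h + 0) t) = 1"
      using Phi_other[of 2] hcirc_in[of 2] by (simp add: pp_def reversepath_def)
  qed
  have Lr: "islift Phi (pp (reversepath (ws S)) (\<lambda>t. h + (0 + Krw t))) (\<lambda>_. 0)"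
  proof (rule islift_const)
    fix t :: real assume t: "t \<in> {0..1}"
    hence "1 - t \<in> {0..1}" by auto
    then obtain m where "m \<ge> 3" "ws S (1 - t) \<in> HE_circle m" using ws_in by blast
    thus "Phi (pp (reversepath (ws S)) (\<lambda>t. h + (0 + Krw t)) t) = 1"
      using Phi_other[of m] by (simp add: pp_def reversepath_def)
  qed
  have Lc: "islift Phi (pp (hcirc 1) (\<lambda>t. h + 0) +++ pp (reversepath (hcirc 2)) (\<lambda>t. h + 0))
     (LX h +++ (\<lambda>t. LX h 1 + 0))"
    by (rule islift_join[OF LX_lift L2 exp_LX1])
  have e2: "exp ((LX h +++ (\<lambda>t. LX h 1 + 0)) 1) = 1"
    using exp_LX1 by (simp add: joinpaths_def)
  note Lcr = islift_join[OF Lc Lr e2]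
  have e3: "exp ((\<lambda>_. 0::complex) 1) = 1" by simp
  note Lg = islift_join[OF Lw Lcr e3]
  have v: "h = (if k \<in> S then tpi else 0)" by (simp add: h_def Kw_1)
  have dt: "dist 0 tpi = 2 * pi" by (simp add: tpi_def norm_mult)
  show ?thesis
    apply (rule exI, rule conjI, subst eq, rule Lg)
    using v dt by (auto simp: joinpaths_def LX_1)
qed

lemma gS_0: "gS S 0 = (0, 0)" by (simp add: gS_def joinpaths_def ws_0)
lemma gS_1: "gS S 1 = (0, 0)" by (simp add: gS_def joinpaths_def reversepath_def ws_0)

lemma path_hcirc: "path (hcirc m)" unfolding path_def by (rule cont_hcirc)
lemma path_ws: "path (ws S)" unfolding path_def by (rule cont_ws)

lemma img_ws: "path_image (ws S) \<subseteq> Y1"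
proof -
  have "ws S t \<in> Y1" if t: "t \<in> {0..1}" for t
  proof -
    obtain m where "m \<ge> 3" "ws S t \<in> HE_circle m" using ws_in[OF t] by blast
    thus ?thesis unfolding Y1_iff by (intro exI[of _ m]) simp
  qed
  thus ?thesis unfolding path_image_def by blast
qed

lemma img_hcirc: "m \<ge> 1 \<Longrightarrow> path_image (hcirc m) \<subseteq> Y1"
proof -
  assume m: "m \<ge> 1"
  have "hcirc m t \<in> Y1" for t
    unfolding Y1_iff using hcirc_in[OF m] m by blast
  thus ?thesis unfolding path_image_def by blast
qed

lemma path_cS: "path cS"
  unfolding cS_def by (intro path_join_imp path_hcirc path_reversepath[THEN iffD2])
    (simp add: pathfinish_def pathstart_def reversepath_def hcirc_0 hcirc_1)

lemma img_cS: "path_image cS \<subseteq> Y1"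
  unfolding cS_def using img_hcirc[of 1] img_hcirc[of 2]
  by (intro subset_trans[OF path_image_join_subset]) (auto simp: path_image_reversepath)

lemma path_gS: "path (gS S)"
  unfolding gS_def
  by (intro path_join_imp path_ws path_cS path_reversepath[THEN iffD2])
     (simp_all add: pathfinish_def pathstart_def reversepath_def ws_0 ws_1 cS_def joinpaths_def hcirc_0 hcirc_1)

lemma img_gS: "path_image (gS S) \<subseteq> Y1"
  unfolding gS_def using img_ws img_cS
  by (intro subset_trans[OF path_image_join_subset] Un_least subset_trans[OF path_image_join_subset])
     (auto simp: path_image_reversepath)

lemma gN_eq: "t \<in> {0..1} \<Longrightarrow> gN S t = gS S t" by (simp add: gN_def)

lemma Y1_loop_gN: "Y1_loop (gN S)"
proof -
  have "path (gN S)" using path_gS[of S] unfolding path_def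
    by (rule continuous_on_eq) (simp add: gN_def)
  moreover have "path_image (gN S) = path_image (gS S)"
    unfolding path_image_def by (auto simp: gN_def)
  ultimately show ?thesis using img_gS
    by (simp add: Y1_loop_def pathstart_def pathfinish_def gN_def gS_0 gS_1)
qed

lemma hu_scaled_in_annulus:
  assumes l: "1/2 \<le> l" "l \<le> 1"
  shows "l *\<^sub>R hu t \<in> annulus 1"
proof -
  define p where "p = l *\<^sub>R hu t"
  have x0: "fst p \<ge> 0" using l by (simp add: p_def hu_def)
  have fp: "fst p = l * (1 - cos (2*pi*t))" "snd p = l * sin (2*pi*t)" by (simp_all add: p_def hu_def)
  have "fst p ^ 2 + snd p ^ 2 = l^2 * ((1 - cos (2*pi*t))^2 + (sin (2*pi*t))^2)"
    unfolding fp by (simp only: power_mult_distrib distrib_left)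
  also have "(1 - cos (2*pi*t))^2 + (sin (2*pi*t))^2 = 2 * (1 - cos (2*pi*t))"
  proof -
    have "(1 - cos (2*pi*t))^2 + (sin (2*pi*t))^2 = 1 - 2 * cos (2*pi*t) + ((sin (2*pi*t))^2 + (cos (2*pi*t))^2)"
      by (simp add: power2_eq_square algebra_simps)
    thus ?thesis by simp
  qed
  finally have "fst p ^ 2 + snd p ^ 2 = l^2 * (2 * (1 - cos (2*pi*t)))" .
  hence e: "fst p ^ 2 + snd p ^ 2 = 2 * l * fst p"
    by (simp add: fp power2_eq_square)
  have "2 * l * fst p \<le> 2 * fst p" using mult_right_mono[of "2 * l" 2 "fst p"] x0 l by simp
  hence c: "p \<in> cb 1" using mem_cb[of 1 p] e by simp
  have "fst p \<le> 2 * l * fst p" using mult_right_mono[of 1 "2 * l" "fst p"] x0 l by simp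
  hence b: "p \<notin> ball (1 / real 2, 0) (1 / real 2)" using mem_ball_k[of 2 p] e by simp
  show ?thesis using c b unfolding p_def annulus_def cb_def by (simp add: numeral_2_eq_2)
qed

lemma hom_circ12: "homotopic_paths (annulus 1) (hcirc 1) (hcirc 2)"
proof (rule homotopic_paths_linear)
  show "path (hcirc 1)" "path (hcirc 2)" by (rule path_hcirc)+
  show "pathstart (hcirc 2) = pathstart (hcirc 1)" "pathfinish (hcirc 2) = pathfinish (hcirc 1)"
    by (simp_all add: pathstart_def pathfinish_def hcirc_0 hcirc_1)
  fix t :: real assume t: "t \<in> {0..1}"
  show "closed_segment (hcirc 1 t) (hcirc 2 t) \<subseteq> annulus 1"
  proof
    fix p assume "p \<in> closed_segment (hcirc 1 t) (hcirc 2 t)"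
    then obtain u :: real where u: "0 \<le> u" "u \<le> 1" "p = (1 - u) *\<^sub>R hcirc 1 t + u *\<^sub>R hcirc 2 t"
      unfolding closed_segment_def by blast
    have "p = (1 - u) *\<^sub>R hu t + (u / 2) *\<^sub>R hu t" using u(3) by (simp add: hcirc_def)
    also have "\<dots> = ((1 - u) + u / 2) *\<^sub>R hu t" by (rule scaleR_add_left[symmetric])
    also have "(1 - u) + u / 2 = 1 - u/2" by simp
    finally have "p = (1 - u / 2) *\<^sub>R hu t" .
    thus "p \<in> annulus 1" using hu_scaled_in_annulus[of "1 - u/2" t] u by simp
  qed
qed

lemma Y1_sub: "Y1 \<subseteq> Yn 1" by (simp add: Yn_def)
lemma ann_sub: "annulus 1 \<subseteq> Yn 1" by (simp add: Yn_def)

lemma gS_null: "homotopic_paths (Yn 1) (gS S) (linepath (0, 0) (0, 0))"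
proof -
  let ?Y = "Yn 1"
  have pw: "path (ws S)" "path_image (ws S) \<subseteq> ?Y" using path_ws img_ws Y1_sub by auto
  have prw: "path (reversepath (ws S))" "path_image (reversepath (ws S)) \<subseteq> ?Y"
    using pw by (simp_all add: path_image_reversepath)
  have p2: "path (hcirc 2)" "path_image (hcirc 2) \<subseteq> ?Y" using path_hcirc img_hcirc[of 2] Y1_sub by auto
  have r2: "homotopic_paths ?Y (reversepath (hcirc 2)) (reversepath (hcirc 2))"
    using p2 by (simp add: path_image_reversepath)
  have rr: "homotopic_paths ?Y (reversepath (ws S)) (reversepath (ws S))"
    using prw by simp
  have rw: "homotopic_paths ?Y (ws S) (ws S)"
    using pw by simp
  have h1: "homotopic_paths ?Y (hcirc 1) (hcirc 2)"
    using homotopic_paths_subset[OF hom_circ12 ann_sub] .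
  have h2: "homotopic_paths ?Y cS (hcirc 2 +++ reversepath (hcirc 2))"
    unfolding cS_def
    by (rule homotopic_paths_join[OF h1 r2]) (simp add: pathfinish_def pathstart_def reversepath_def hcirc_0 hcirc_1)
  have h3: "homotopic_paths ?Y (hcirc 2 +++ reversepath (hcirc 2)) (linepath (0, 0) (0, 0))"
    using homotopic_paths_rinv[OF p2] by (simp add: pathstart_def hcirc_0)
  have h4: "homotopic_paths ?Y cS (linepath (0, 0) (0, 0))" using homotopic_paths_trans[OF h2 h3] .
  have h5: "homotopic_paths ?Y (cS +++ reversepath (ws S)) (linepath (0, 0) (0, 0) +++ reversepath (ws S))"
    by (rule homotopic_paths_join[OF h4 rr]) (simp add: pathfinish_def pathstart_def reversepath_def cS_def joinpaths_def hcirc_0 ws_1)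
  have h6: "homotopic_paths ?Y (linepath (0, 0) (0, 0) +++ reversepath (ws S)) (reversepath (ws S))"
    using homotopic_paths_lid[OF prw] by (simp add: pathstart_def reversepath_def ws_1)
  have h7: "homotopic_paths ?Y (gS S) (ws S +++ reversepath (ws S))"
    unfolding gS_def
    by (rule homotopic_paths_join[OF rw homotopic_paths_trans[OF h5 h6]])
      (simp add: pathfinish_def pathstart_def cS_def joinpaths_def hcirc_0 ws_1)
  have h8: "homotopic_paths ?Y (ws S +++ reversepath (ws S)) (linepath (0, 0) (0, 0))"
    using homotopic_paths_rinv[OF pw] by (simp add: pathstart_def ws_0)
  show ?thesis using homotopic_paths_trans[OF h7 h8] .
qed

lemma gN_null: "homotopic_paths (Yn 1) (gN S) (linepath (0, 0) (0, 0))"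
proof -
  have "homotopic_paths (Yn 1) (gS S) (gN S)"
    using path_gS img_gS Y1_sub by (intro homotopic_paths_eq) (auto simp: gN_def)
  thus ?thesis using homotopic_paths_trans[OF homotopic_paths_sym gS_null] by blast
qed

lemma distinct_classes:
  assumes hom: "homotopic_paths Y1 (gN S) (gN S')"
  shows "S = S'"
proof (rule set_eqI)
  fix k :: nat
  obtain L0 where L0: "islift Phi (pp (gS S) (K1 k S)) L0" "L0 1 = (if k \<in> S then tpi else 0)"
    using lift2 by blast
  obtain L1 where L1: "islift Phi (pp (gS S') (K1 k S')) L1" "L1 1 = (if k \<in> S' then tpi else 0)"
    using lift2 by blast
  have k0: "islift (qn (k + 3)) (gS S) (K1 k S)" "islift (qn (k + 3)) (gS S') (K1 k S')" by (rule lift1)+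
  have "L0 1 = L1 1"
  proof (rule INV[of "k + 3" "gN S" "gN S'" "K1 k S" "K1 k S'" L0 L1])
    show "k + 3 \<ge> 2" by simp
    show "homotopic_paths Y1 (gN S) (gN S')" by (rule hom)
    show "gN S 0 = (0, 0)" "gN S 1 = (0, 0)" by (simp_all add: gN_def gS_0 gS_1)
    show "continuous_on {0..1} (K1 k S)" "K1 k S 0 = 0" using k0(1) by (simp_all add: islift_def)
    show "continuous_on {0..1} (K1 k S')" "K1 k S' 0 = 0" using k0(2) by (simp_all add: islift_def)
    show "exp (K1 k S t) = qn (k + 3) (gN S t)" if "t \<in> {0..1}" for t
      using k0(1) that by (simp add: islift_def gN_eq)
    show "exp (K1 k S' t) = qn (k + 3) (gN S' t)" if "t \<in> {0..1}" for t
      using k0(2) that by (simp add: islift_def gN_eq)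
    show "continuous_on {0..1} L0" "L0 0 = 0" using L0(1) by (simp_all add: islift_def)
    show "continuous_on {0..1} L1" "L1 0 = 0" using L1(1) by (simp_all add: islift_def)
    show "exp (L0 t) = Phi (gN S t, K1 k S t)" if "t \<in> {0..1}" for t
      using L0(1) that by (simp add: islift_def gN_eq pp_def)
    show "exp (L1 t) = Phi (gN S' t, K1 k S' t)" if "t \<in> {0..1}" for t
      using L1(1) that by (simp add: islift_def gN_eq pp_def)
  qed
  moreover have "tpi \<noteq> 0" by (simp add: tpi_def)
  ultimately show "k \<in> S \<longleftrightarrow> k \<in> S'" using L0(2) L1(2) by (auto split: if_splits)
qed

lemma uncountable_natsets: "uncountable (UNIV :: nat set set)"
proof
  assume "countable (UNIV :: nat set set)"
  then obtain f :: "nat set \<Rightarrow> nat" where "inj f" unfolding countable_def by blast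
  hence "surj (inv f)" by (rule inj_imp_surj_inv)
  hence "(inv f) ` (UNIV :: nat set) = Pow UNIV" by simp
  thus False using Cantors_theorem[of "UNIV :: nat set"] by blast
qed

theorem corollary8:
  assumes "HA_topology T"
  shows "uncountable (kernel_loops T // Y1_homotopy_rel)"
proof
  have sub: "subtopology T (Yn 1) = top_of_set (Yn 1)"
    using assms unfolding HA_topology_def by auto
  have ker: "gN S \<in> kernel_loops T" for S
  proof -
    have "homotopic_with (\<lambda>r. pathstart r = pathstart (gN S) \<and> pathfinish r = pathfinish (gN S))
        (top_of_set {0..1}) (top_of_set (Yn 1)) (gN S) (linepath (0, 0) (0, 0))"
      using gN_null unfolding homotopic_paths_def .
    hence "homotopic_with (\<lambda>h. h 0 = (0, 0) \<and> h 1 = (0, 0)) (top_of_set {0..1}) T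
        (id \<circ> gN S) (id \<circ> linepath (0, 0) (0, 0))"
    proof (rule homotopic_with_compose_continuous_map_left)
      show "continuous_map (top_of_set (Yn 1)) T id"
      proof -
        have "continuous_map (subtopology T (Yn 1)) T id"
          by (rule continuous_map_from_subtopology[OF continuous_map_id])
        thus ?thesis by (simp only: sub)
      qed
      fix j :: "real \<Rightarrow> real \<times> real"
      assume "pathstart j = pathstart (gN S) \<and> pathfinish j = pathfinish (gN S)"
      thus "(id \<circ> j) 0 = (0, 0) \<and> (id \<circ> j) 1 = (0, 0)"
        by (simp add: pathstart_def pathfinish_def gN_def gS_0 gS_1)
    qed
    thus ?thesis using Y1_loop_gN[of S] by (simp add: kernel_loops_def linepath_refl)
  qed
  define cls where "cls S = Y1_homotopy_rel `` {gN S}" for S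
  have inq: "cls S \<in> kernel_loops T // Y1_homotopy_rel" for S
    unfolding cls_def by (rule quotientI[OF ker])
  have refl: "(gN S, gN S) \<in> Y1_homotopy_rel" for S
    using Y1_loop_gN[of S] by (simp add: Y1_homotopy_rel_def Y1_loop_def)
  have inj: "inj cls"
  proof (rule injI)
    fix S S' assume "cls S = cls S'"
    hence "gN S' \<in> cls S" using refl[of S'] by (simp add: cls_def)
    hence "homotopic_paths Y1 (gN S) (gN S')" by (simp add: cls_def Y1_homotopy_rel_def)
    thus "S = S'" by (rule distinct_classes)
  qed
  assume "countable (kernel_loops T // Y1_homotopy_rel)"
  hence "countable (range cls)" by (rule countable_subset[rotated]) (use inq in auto)
  hence "countable (UNIV :: nat set set)" using countable_image_inj_on[OF _ inj] by blast
  thus False using uncountable_natsets by simp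
qed

end
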